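(* Consider a one-site PTM cascade with $n\ge1$ layers and positive total amounts. For each $i=0,\dots,n-1$ there is $\beta_i\in(0,\infty)$ such that: (a) $f_i$ is a continuous increasing function on $[0,\beta_i)$ with $f_i(0)=0$, mapping $[0,\beta_i)$ onto $[0,\infty)$; $\beta_i$ is the smallest positive singularity of $f_i$, and $d_{i+1}\big(f_{i+1}(\beta_i),f_{i+2}^Y(\beta_i)\big)=0$; (b) at the BMSS, $S_n^1\in[0,\beta_i)$ and $S_i^1=f_i(S_n^1)$ (with $S_0^1=E$); $f_i$ depends only on rate constants and on $\overline{F}_j,\overline{S}_j$ for $j\ge i+1$, and $f_i(s)=\frac{\lambda_{i+1}\cdots\lambda_n\overline{F}_{i+1}\cdots\overline{F}_n\,s}{d_{i+1}(f_{i+1}(s),f^Y_{i+2}(s))\cdots d_n(f_n(s),0)}$; (c) $\beta_{n-1}=\alpha_n$ and $\beta_i<\beta_{i+1}$ for $i<n-1$; (d) if all parameters except $\overline{S}_{i+1}$ are fixed and $\overline{S}_{i+1}\to+\infty$, then $\beta_i\to\beta_{i+1}$, where $\beta_n:=+\infty$; (e) at the BMSS, $S_j^1<\alpha_j$ for every $j=1,\dots,n$.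
   Context: A one-site PTM cascade with $n$ layers has species $E=S_0^1$ and, for $i=1,\dots,n$, $S_i^0,S_i^1,F_i,Y_i^0,Y_i^1$, with reactions $S_{i-1}^1+S_i^0 \rightleftharpoons Y_i^0 \to S_{i-1}^1+S_i^1$ (rate constants $a_i^0,b_i^0,c_i^0$) and $F_i+S_i^1\rightleftharpoons Y_i^1\to F_i+S_i^0$ (rate constants $a_i^1,b_i^1,c_i^1$), all positive, mass-action kinetics. Put $\delta_i=a_i^1/(b_i^1+c_i^1)$, $\gamma_i=(c_i^1/c_i^0)\delta_i$, $\lambda_i=\frac{b_i^0+c_i^0}{a_i^0}\gamma_i$. Given total amounts $\overline{E},\overline{F}_i,\overline{S}_i$, a steady state is a real solution of: $Y_i^0=\gamma_iF_iS_i^1$, $Y_i^1=\delta_iF_iS_i^1$, $\lambda_iF_iS_i^1=S_i^0S_{i-1}^1$, $\overline{F}_i=F_i+Y_i^1$, $\overline{S}_i=S_i^0+S_i^1+Y_i^0+Y_i^1+Y_{i+1}^0$ ($i=1,\dots,n$, $Y_{n+1}^0:=0$), $\overline{E}=E+Y_1^0$. A BMSS is a steady state with positive total amounts and all concentrations nonnegative; it exists and is unique. Increasing means strictly increasing. Define for $i=1,\dots,n$: $d_i(x,y)=(\overline{S}_i-y)-x-\overline{F}_i(\delta_i+\gamma_i)x+\delta_i(\overline{S}_i-y)x-\delta_ix^2$, and let $\alpha_i$ be the unique positive root of $x\mapsto d_i(x,0)$. Let $g_i^Y(x)=\frac{\gamma_i\overline{F}_ix}{1+\delta_ix}$. Define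 rational functions of $s$ recursively: $f_n(s)=s$, $f_{n+1}^Y(s)=0$, and for $i=n,\dots,1$: $f_i^Y(s)=g_i^Y(f_i(s))$, $f_{i-1}(s)=\frac{\lambda_i\overline{F}_if_i(s)}{d_i(f_i(s),f_{i+1}^Y(s))}$. *)

theory Defs
  imports "HOL-Analysis.Analysis"
begin

text \<open>Parameters of a one-site PTM cascade: rate constants and total amounts,
  all indexed by the layer i (meaningful for i = 1..n).\<close>
record ptm_params =
  a0 :: "nat \<Rightarrow> real"
  b0 :: "nat \<Rightarrow> real"
  c0 :: "nat \<Rightarrow> real"
  a1 :: "nat \<Rightarrow> real"
  b1 :: "nat \<Rightarrow> real"
  c1 :: "nat \<Rightarrow> real"
  Fb :: "nat \<Rightarrow> real"
  Sb :: "nat \<Rightarrow> real"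

definition valid_params :: "ptm_params \<Rightarrow> nat \<Rightarrow> bool" where
  "valid_params P n \<longleftrightarrow> (\<forall>i\<in>{1..n}.
     0 < a0 P i \<and> 0 < b0 P i \<and> 0 < c0 P i \<and> 0 < a1 P i \<and> 0 < b1 P i \<and> 0 < c1 P i
     \<and> 0 < Fb P i \<and> 0 < Sb P i)"

definition delta :: "ptm_params \<Rightarrow> nat \<Rightarrow> real" where
  "delta P i = a1 P i / (b1 P i + c1 P i)"

definition gamma :: "ptm_params \<Rightarrow> nat \<Rightarrow> real" where
  "gamma P i = (c1 P i / c0 P i) * delta P i"

definition lam :: "ptm_params \<Rightarrow> nat \<Rightarrow> real" where
  "lam P i = ((b0 P i + c0 P i) / a0 P i) * gamma P i"

definition dd :: "ptm_params \<Rightarrow> nat \<Rightarrow> real \<Rightarrow> real \<Rightarrow> real" where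
  "dd P i x y = (Sb P i - y) - x - Fb P i * (delta P i + gamma P i) * x
                + delta P i * (Sb P i - y) * x - delta P i * x ^ 2"

definition alpha :: "ptm_params \<Rightarrow> nat \<Rightarrow> real" where
  "alpha P i = (THE x. 0 < x \<and> dd P i x 0 = 0)"

definition gY :: "ptm_params \<Rightarrow> nat \<Rightarrow> real \<Rightarrow> real" where
  "gY P i x = gamma P i * Fb P i * x / (1 + delta P i * x)"

text \<open>cas P n j s = (f_{n-j}(s), f^Y_{n-j+1}(s)), computed by the backward recursion.\<close>
primrec cas :: "ptm_params \<Rightarrow> nat \<Rightarrow> nat \<Rightarrow> real \<Rightarrow> real \<times> real" where
  "cas P n 0 s = (s, 0)"
| "cas P n (Suc j) s =
     (let x = fst (cas P n j s); y = snd (cas P n j s); i = n - j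
      in (lam P i * Fb P i * x / dd P i x y, gY P i x))"

definition fcas :: "ptm_params \<Rightarrow> nat \<Rightarrow> nat \<Rightarrow> real \<Rightarrow> real" where
  "fcas P n i s = fst (cas P n (n - i) s)"

definition fYcas :: "ptm_params \<Rightarrow> nat \<Rightarrow> nat \<Rightarrow> real \<Rightarrow> real" where
  "fYcas P n i s = (if i = n + 1 then 0 else gY P i (fcas P n i s))"

definition singular :: "(real \<Rightarrow> real) \<Rightarrow> real \<Rightarrow> bool" where
  "singular g s \<longleftrightarrow> \<not> (\<exists>L. (g \<longlongrightarrow> L) (at s))"

definition beta :: "ptm_params \<Rightarrow> nat \<Rightarrow> nat \<Rightarrow> real" where
  "beta P n i = Inf {s. 0 < s \<and> singular (fcas P n i) s}"

text \<open>Steady-state equations together with nonnegativity of concentrations (BMSS).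
  Concentrations: E, and S0 i = S_i^0, S1 i = S_i^1, Fc i = F_i, Y0 i = Y_i^0, Y1 i = Y_i^1.\<close>
definition bmss :: "ptm_params \<Rightarrow> nat \<Rightarrow> real \<Rightarrow> real \<Rightarrow> (nat \<Rightarrow> real) \<Rightarrow> (nat \<Rightarrow> real)
     \<Rightarrow> (nat \<Rightarrow> real) \<Rightarrow> (nat \<Rightarrow> real) \<Rightarrow> (nat \<Rightarrow> real) \<Rightarrow> bool" where
  "bmss P n Eb E S0 S1 Fc Y0 Y1 \<longleftrightarrow>
     (let S1' = (\<lambda>i. if i = 0 then E else S1 i);
          Y0' = (\<lambda>i. if i = n + 1 then 0 else Y0 i) in
     (\<forall>i\<in>{1..n}.
        Y0 i = gamma P i * Fc i * S1 i \<and>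
        Y1 i = delta P i * Fc i * S1 i \<and>
        lam P i * Fc i * S1 i = S0 i * S1' (i - 1) \<and>
        Fb P i = Fc i + Y1 i \<and>
        Sb P i = S0 i + S1 i + Y0 i + Y1 i + Y0' (i + 1)) \<and>
     Eb = E + Y0 1 \<and>
     0 \<le> E \<and>
     (\<forall>i\<in>{1..n}. 0 \<le> S0 i \<and> 0 \<le> S1 i \<and> 0 \<le> Fc i \<and> 0 \<le> Y0 i \<and> 0 \<le> Y1 i))"

end

theory Submission imports Defs begin

lemma quad:
  fixes S d b :: real
  assumes S: "S > 0" and d: "d > 0"
  shows "\<exists>a>0. S + b*a - d*a^2 = 0 \<and> (\<forall>x\<ge>0. S + b*x - d*x^2 = -(x-a)*(d*x + S/a))"
proof -
  define r where "r = sqrt (b^2 + 4*d*S)"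
  have nn: "0 \<le> b^2 + 4*d*S" using S d by (simp add: add_nonneg_nonneg mult_nonneg_nonneg)
  have r2: "r^2 = b^2 + 4*d*S" unfolding r_def using nn by simp
  have r0: "r \<ge> 0" unfolding r_def using nn by simp
  have "r^2 > b^2" using r2 S d by simp
  hence "\<bar>b\<bar> < r" using r0 power_less_imp_less_base[of "\<bar>b\<bar>" 2 r] by simp
  hence rb: "r > -b" by linarith
  define a where "a = (b + r)/(2*d)"
  have a0: "a > 0" unfolding a_def using rb d by simp
  have qa: "S + b*a - d*a^2 = 0" unfolding a_def using d r2
    by (simp add: field_simps power2_eq_square)
  have "\<forall>x\<ge>0. S + b*x - d*x^2 = -(x-a)*(d*x + S/a)"
  proof (intro allI impI)
    fix x :: real
    have S: "S = d*a^2 - b*a" using qa by simp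
    have Sa: "S/a = d*a - b" using qa a0 by (simp add: field_simps power2_eq_square)
    show "S + b*x - d*x^2 = -(x-a)*(d*x + S/a)" unfolding Sa
      by (subst S) (simp add: algebra_simps power2_eq_square)
  qed
  thus ?thesis using a0 qa by blast
qed

lemma vp:
  assumes "valid_params P n" "j \<in> {1..n}"
  shows "0 < delta P j" "0 < gamma P j" "0 < lam P j" "0 < Fb P j" "0 < Sb P j"
proof -
  have h: "0 < a0 P j \<and> 0 < b0 P j \<and> 0 < c0 P j \<and> 0 < a1 P j \<and> 0 < b1 P j \<and> 0 < c1 P j
     \<and> 0 < Fb P j \<and> 0 < Sb P j" using assms unfolding valid_params_def by blast
  show "0 < delta P j" unfolding delta_def using h by simp
  thus "0 < gamma P j" unfolding gamma_def using h by simp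
  thus "0 < lam P j" unfolding lam_def using h by simp
  show "0 < Fb P j" "0 < Sb P j" using h by auto
qed

lemma dd_y: "dd P j x y = dd P j x 0 - y * (1 + delta P j * x)"
  unfolding dd_def by (simp add: algebra_simps)

lemma dd_0: "dd P j x 0 = Sb P j + (delta P j * Sb P j - 1 - Fb P j * (delta P j + gamma P j)) * x
   - delta P j * x^2"
  unfolding dd_def by (simp add: algebra_simps)

lemma alpha_char:
  assumes "valid_params P n" "j \<in> {1..n}"
  shows "0 < alpha P j" "dd P j (alpha P j) 0 = 0"
    "\<And>x. 0 \<le> x \<Longrightarrow> (0 < dd P j x 0 \<longleftrightarrow> x < alpha P j)"
    "\<And>x. 0 \<le> x \<Longrightarrow> alpha P j < x \<Longrightarrow> dd P j x 0 < 0"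
proof -
  note v = vp[OF assms]
  obtain a where a0: "a > 0" and qa: "Sb P j + (delta P j * Sb P j - 1 - Fb P j * (delta P j + gamma P j))*a - delta P j*a^2 = 0"
    and fac: "\<forall>x\<ge>0. Sb P j + (delta P j * Sb P j - 1 - Fb P j * (delta P j + gamma P j))*x - delta P j*x^2
        = -(x-a)*(delta P j*x + Sb P j/a)"
    using quad[OF v(5) v(1), of "delta P j * Sb P j - 1 - Fb P j * (delta P j + gamma P j)"] by blast
  have fac': "dd P j x 0 = -(x-a)*(delta P j*x + Sb P j/a)" if "x \<ge> 0" for x
    using fac that unfolding dd_0 by simp
  have pos: "delta P j*x + Sb P j/a > 0" if "x \<ge> 0" for x
    using that v a0 by (simp add: add_nonneg_pos)
  have da: "dd P j a 0 = 0" using fac'[of a] a0 by simp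
  have "alpha P j = a" unfolding alpha_def
  proof (rule the_equality)
    show "0 < a \<and> dd P j a 0 = 0" using a0 da by simp
  next
    fix x assume "0 < x \<and> dd P j x 0 = 0"
    thus "x = a" using fac'[of x] pos[of x] by simp
  qed
  thus "0 < alpha P j" "dd P j (alpha P j) 0 = 0" using a0 da by auto
  show "\<And>x. 0 \<le> x \<Longrightarrow> (0 < dd P j x 0 \<longleftrightarrow> x < alpha P j)"
  proof -
    fix x :: real assume x: "0 \<le> x"
    have "0 < dd P j x 0 \<longleftrightarrow> 0 < -(x-a)*(delta P j*x + Sb P j/a)" using fac'[OF x] by simp
    also have "\<dots> \<longleftrightarrow> x < a" using pos[OF x] by (simp add: zero_less_mult_iff)
    finally show "(0 < dd P j x 0 \<longleftrightarrow> x < alpha P j)" using \<open>alpha P j = a\<close> by simp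
  qed
  show "\<And>x. 0 \<le> x \<Longrightarrow> alpha P j < x \<Longrightarrow> dd P j x 0 < 0"
  proof -
    fix x :: real assume x: "0 \<le> x" "alpha P j < x"
    thus "dd P j x 0 < 0" using fac'[OF x(1)] pos[OF x(1)] \<open>alpha P j = a\<close>
      by (simp add: mult_neg_pos)
  qed
qed

lemma core_ineq:
  fixes S F d g xs xt ys yt :: real
  assumes d: "d > 0" and F: "F \<ge> 0" and g: "g \<ge> 0"
    and x: "0 < xs" "xs < xt" and y: "ys \<le> yt" and Sy: "S - yt > 0"
  shows "xs * ((S - yt) - xt - F*(d+g)*xt + d*(S-yt)*xt - d*xt^2)
       < xt * ((S - ys) - xs - F*(d+g)*xs + d*(S-ys)*xs - d*xs^2)"
proof -
  have eq: "xt * ((S - ys) - xs - F*(d+g)*xs + d*(S-ys)*xs - d*xs^2)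
       - xs * ((S - yt) - xt - F*(d+g)*xt + d*(S-yt)*xt - d*xt^2)
     = ((S-ys)*xt - (S-yt)*xs) + d*xs*xt*(yt-ys) + d*xs*xt*(xt-xs)"
    by (simp add: algebra_simps power2_eq_square)
  have "(S-ys)*xt \<ge> (S-yt)*xt" using y x by (intro mult_right_mono) auto
  moreover have "(S-yt)*xt > (S-yt)*xs" using Sy x by simp
  moreover have "d*xs*xt*(yt-ys) \<ge> 0" using d x y by simp
  moreover have "d*xs*xt*(xt-xs) > 0" using d x by simp
  ultimately show ?thesis using eq by linarith
qed

lemma neg_ineq:
  fixes S F d g xt yt :: real
  assumes d: "d > 0" and F: "F \<ge> 0" and g: "g \<ge> 0"
    and x: "0 < xt" and Sy: "S - yt \<le> 0"
  shows "((S - yt) - xt - F*(d+g)*xt + d*(S-yt)*xt - d*xt^2) < 0"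
proof -
  have "(S-yt)*(1 + d*xt) \<le> 0" using Sy d x by (simp add: mult_nonpos_nonneg)
  moreover have "F*(d+g)*xt \<ge> 0" using F d g x by simp
  moreover have "d*xt^2 \<ge> 0" using d by simp
  moreover have "(S - yt) + d*(S-yt)*xt = (S-yt)*(1 + d*xt)" by (simp add: algebra_simps)
  ultimately show ?thesis using x by linarith
qed

definition Dg :: "real \<Rightarrow> real \<Rightarrow> real \<Rightarrow> real \<Rightarrow> real \<Rightarrow> real \<Rightarrow> real" where
  "Dg S F d g x y = (S - y) - x - F*(d+g)*x + d*(S-y)*x - d*x^2"

lemma dd_Dg: "dd P j x y = Dg (Sb P j) (Fb P j) (delta P j) (gamma P j) x y"
  unfolding dd_def Dg_def by simp

lemma Dg_cont[continuous_intros]: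
  "continuous_on A x \<Longrightarrow> continuous_on A y \<Longrightarrow> continuous_on A (\<lambda>s. Dg S F d g (x s) (y s))"
  unfolding Dg_def by (intro continuous_intros)

lemma Dg_key:
  fixes x y :: "real \<Rightarrow> real"
  assumes d: "d > 0" and F: "F \<ge> 0" and g: "g \<ge> 0"
    and xm: "strict_mono_on {0..<b} x" and x0: "x 0 = 0"
    and ym: "mono_on {0..<b} y"
    and u: "0 < u" "u < t" "t < b" and Du: "Dg S F d g (x u) (y u) \<le> 0"
  shows "Dg S F d g (x t) (y t) < 0"
proof -
  have xu: "0 < x u" using xm x0 u unfolding strict_mono_on_def by (metis atLeastLessThan_iff less_eq_real_def less_trans)
  have xt: "x u < x t" using xm u unfolding strict_mono_on_def by auto
  have yt: "y u \<le> y t" using ym u unfolding mono_on_def by auto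
  show ?thesis
  proof (cases "S - y t > 0")
    case True
    have "x u * Dg S F d g (x t) (y t) < x t * Dg S F d g (x u) (y u)"
      unfolding Dg_def using core_ineq[OF d F g xu xt yt True] .
    also have "\<dots> \<le> 0" using Du xu xt by (simp add: mult_nonneg_nonpos)
    finally show ?thesis using xu by (simp add: mult_less_0_iff)
  next
    case False
    thus ?thesis unfolding Dg_def using neg_ineq[OF d F g _, of "x t" S "y t"] xu xt by simp
  qed
qed

lemma first_zero:
  fixes x y :: "real \<Rightarrow> real"
  assumes d: "d > 0" and F: "F \<ge> 0" and g: "g \<ge> 0" and S: "S > 0"
    and xc: "continuous_on {0..<b} x" and xm: "strict_mono_on {0..<b} x" and x0: "x 0 = 0"
    and yc: "continuous_on {0..<b} y" and ym: "mono_on {0..<b} y" and y0: "y 0 = 0"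
    and s1: "0 < s1" "s1 < b" and Ds1: "Dg S F d g (x s1) (y s1) \<le> 0"
  shows "\<exists>\<beta>. 0 < \<beta> \<and> \<beta> \<le> s1 \<and> Dg S F d g (x \<beta>) (y \<beta>) = 0 \<and>
     (\<forall>s. 0 \<le> s \<and> s < b \<longrightarrow> (0 < Dg S F d g (x s) (y s) \<longleftrightarrow> s < \<beta>))"
proof -
  define D where "D s = Dg S F d g (x s) (y s)" for s
  have D0: "D 0 = S" unfolding D_def Dg_def x0 y0 by simp
  have key: "D t < 0" if "0 < u" "u < t" "t < b" "D u \<le> 0" for u t
    using Dg_key[OF d F g xm x0 ym that(1-3)] that(4) unfolding D_def by simp
  have cont: "continuous_on {0..s1} D" unfolding D_def
    by (intro continuous_intros continuous_on_subset[OF xc] continuous_on_subset[OF yc]) (use s1 in auto)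
  obtain \<beta> where b0: "0 \<le> \<beta>" and b1: "\<beta> \<le> s1" and Db: "D \<beta> = 0"
    using IVT2'[of D s1 0 0, OF _ _ _ cont] Ds1 D0 S s1 unfolding D_def by auto
  have bpos: "0 < \<beta>" using b0 Db D0 S by (cases "\<beta> = 0") auto
  have char: "0 < D s \<longleftrightarrow> s < \<beta>" if "0 \<le> s" "s < b" for s
  proof
    assume "0 < D s"
    show "s < \<beta>"
    proof (rule ccontr)
      assume "\<not> s < \<beta>"
      hence "\<beta> < s" using \<open>0 < D s\<close> Db by (cases "s = \<beta>") auto
      thus False using key[OF bpos _ that(2)] Db \<open>0 < D s\<close> by auto
    qed
  next
    assume "s < \<beta>"
    show "0 < D s"
    proof (rule ccontr)
      assume "\<not> 0 < D s"
      hence "s \<noteq> 0" using D0 S by auto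
      hence "0 < s" using that by simp
      thus False using key[of s \<beta>] \<open>s < \<beta>\<close> b1 s1 \<open>\<not> 0 < D s\<close> Db by auto
    qed
  qed
  show ?thesis using bpos b1 Db char unfolding D_def by blast
qed

lemma f_props:
  fixes x y :: "real \<Rightarrow> real"
  assumes d: "d > 0" and F: "F \<ge> 0" and g: "g \<ge> 0" and L: "L > 0"
    and xc: "continuous_on {0..<b} x" and xm: "strict_mono_on {0..<b} x" and x0: "x 0 = 0"
    and yc: "continuous_on {0..<b} y" and ym: "mono_on {0..<b} y"
    and bb: "0 < \<beta>" "\<beta> < b" and Dp: "\<And>s. 0 \<le> s \<Longrightarrow> s < \<beta> \<Longrightarrow> 0 < Dg S F d g (x s) (y s)"
    and Db: "Dg S F d g (x \<beta>) (y \<beta>) = 0"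
  shows "continuous_on {0..<\<beta>} (\<lambda>s. L * x s / Dg S F d g (x s) (y s))"
    "strict_mono_on {0..<\<beta>} (\<lambda>s. L * x s / Dg S F d g (x s) (y s))"
    "filterlim (\<lambda>s. L * x s / Dg S F d g (x s) (y s)) at_top (at_left \<beta>)"
proof -
  define D where "D s = Dg S F d g (x s) (y s)" for s
  have xc': "continuous_on {0..<\<beta>} x" by (rule continuous_on_subset[OF xc]) (use bb in auto)
  have yc': "continuous_on {0..<\<beta>} y" by (rule continuous_on_subset[OF yc]) (use bb in auto)
  show "continuous_on {0..<\<beta>} (\<lambda>s. L * x s / Dg S F d g (x s) (y s))"
    apply (intro continuous_intros xc' yc') using Dp by (metis atLeastLessThan_iff less_irrefl)
  have xpos: "0 < x s" if "0 < s" "s < b" for s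
  proof -
    have "x 0 < x s" using xm that unfolding strict_mono_on_def by auto
    thus ?thesis using x0 by simp
  qed
  show "strict_mono_on {0..<\<beta>} (\<lambda>s. L * x s / Dg S F d g (x s) (y s))"
  proof (rule strict_mono_onI)
    fix r t assume r: "r \<in> {0..<\<beta>}" and t: "t \<in> {0..<\<beta>}" and rt: "r < t"
    have Dr: "0 < D r" and Dt: "0 < D t" using Dp r t unfolding D_def by auto
    have xt: "0 < x t" using xpos[of t] r t rt bb by auto
    show "L * x r / Dg S F d g (x r) (y r) < L * x t / Dg S F d g (x t) (y t)"
    proof (cases "r = 0")
      case True
      thus ?thesis using x0 xt Dt L unfolding D_def by simp
    next
      case False
      hence xr: "0 < x r" using xpos[of r] r bb by auto
      have xrt: "x r < x t" using xm r t rt bb unfolding strict_mono_on_def by auto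
      have yrt: "y r \<le> y t" using ym r t rt bb unfolding mono_on_def by auto
      have Syt: "S - y t > 0"
      proof (rule ccontr)
        assume "\<not> S - y t > 0"
        hence "D t < 0" unfolding D_def Dg_def using neg_ineq[OF d F g xt, of S "y t"] by simp
        thus False using Dt by simp
      qed
      have "x r * D t < x t * D r"
        unfolding D_def Dg_def using core_ineq[OF d F g xr xrt yrt Syt] .
      hence "x r / D r < x t / D t" using Dr Dt by (simp add: divide_simps mult.commute)
      hence "L * (x r / D r) < L * (x t / D t)" using L by (rule mult_strict_left_mono)
      thus ?thesis unfolding D_def by (simp only: times_divide_eq_right)
    qed
  qed
  have bint: "\<beta> \<in> interior {0..<b}" using bb by simp
  have cx: "(x \<longlongrightarrow> x \<beta>) (at_left \<beta>)"
    using continuous_on_interior[OF xc bint] by (simp add: isCont_def filterlim_at_split)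
  have cy: "(y \<longlongrightarrow> y \<beta>) (at_left \<beta>)"
    using continuous_on_interior[OF yc bint] by (simp add: isCont_def filterlim_at_split)
  have cD: "(D \<longlongrightarrow> 0) (at_left \<beta>)"
  proof -
    have "((\<lambda>s. Dg S F d g (x s) (y s)) \<longlongrightarrow> Dg S F d g (x \<beta>) (y \<beta>)) (at_left \<beta>)"
      unfolding Dg_def by (intro tendsto_intros cx cy)
    thus ?thesis using Db unfolding D_def by simp
  qed
  have ev: "\<forall>\<^sub>F s in at_left \<beta>. 0 < D s"
    using eventually_at_left_real[OF bb(1)] by eventually_elim (use Dp in \<open>auto simp: D_def\<close>)
  have inv: "filterlim (\<lambda>s. inverse (D s)) at_top (at_left \<beta>)"
    by (rule filterlim_inverse_at_top[OF cD ev])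
  have cLx: "((\<lambda>s. L * x s) \<longlongrightarrow> L * x \<beta>) (at_left \<beta>)" by (intro tendsto_intros cx)
  have "0 < L * x \<beta>" using L xpos[OF bb] by simp
  from filterlim_tendsto_pos_mult_at_top[OF cLx this inv]
  show "filterlim (\<lambda>s. L * x s / Dg S F d g (x s) (y s)) at_top (at_left \<beta>)"
    unfolding D_def by (simp add: divide_inverse)
qed

lemma fcas_n[simp]: "fcas P n n s = s"
  unfolding fcas_def by simp

lemma fYcas_last[simp]: "fYcas P n (Suc n) s = 0"
  unfolding fYcas_def by simp

lemma snd_cas: "j \<le> n \<Longrightarrow> snd (cas P n j s) = fYcas P n (n - j + 1) s"
proof (cases j)
  case 0 thus ?thesis by simp
next
  case (Suc k)
  assume "j \<le> n"
  hence "n - j + 1 = n - k" "n - k \<noteq> n + 1" "n - (n - k) = k" using Suc by auto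
  thus ?thesis using Suc unfolding fYcas_def fcas_def by (simp add: Let_def)
qed

lemma fcas_rec:
  assumes "i < n"
  shows "fcas P n i s = lam P (i+1) * Fb P (i+1) * fcas P n (i+1) s /
           dd P (i+1) (fcas P n (i+1) s) (fYcas P n (i+2) s)"
proof -
  define j where "j = n - (i+1)"
  have nj: "n - i = Suc j" "n - j = i + 1" "n - j + 1 = i + 2" using assms unfolding j_def by auto
  have "fcas P n i s = fst (cas P n (Suc j) s)" unfolding fcas_def nj(1) ..
  also have "\<dots> = lam P (i+1) * Fb P (i+1) * fst (cas P n j s) / dd P (i+1) (fst (cas P n j s)) (snd (cas P n j s))"
    by (simp add: Let_def nj(2))
  also have "snd (cas P n j s) = fYcas P n (i+2) s" using snd_cas[of j n P s] nj assms unfolding j_def by simp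
  also have "fst (cas P n j s) = fcas P n (i+1) s" unfolding fcas_def j_def ..
  finally show ?thesis .
qed

lemma fYcas_eq: "j \<le> n \<Longrightarrow> fYcas P n j s = gY P j (fcas P n j s)"
  unfolding fYcas_def by simp

lemma gY_mono:
  assumes "valid_params P n" "j \<in> {1..n}" "0 \<le> u" "u \<le> v"
  shows "gY P j u \<le> gY P j v"
proof -
  note v = vp[OF assms(1,2)]
  have "u * (1 + delta P j * v) \<le> v * (1 + delta P j * u)"
    using assms(3,4) by (simp add: algebra_simps)
  hence "u / (1 + delta P j * u) \<le> v / (1 + delta P j * v)"
    using v assms(3,4) by (simp add: divide_simps add_pos_nonneg mult.commute)
  hence "(gamma P j * Fb P j) * (u / (1 + delta P j * u)) \<le> (gamma P j * Fb P j) * (v / (1 + delta P j * v))"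
    using v by (intro mult_left_mono) auto
  thus ?thesis unfolding gY_def by simp
qed

lemma gY_nonneg:
  assumes "valid_params P n" "j \<in> {1..n}" "0 \<le> u"
  shows "0 \<le> gY P j u"
  using vp[OF assms(1,2)] assms(3) unfolding gY_def by (simp add: add_pos_nonneg)

lemma gY_cont:
  assumes "valid_params P n" "j \<in> {1..n}" "continuous_on A z" "\<And>s. s \<in> A \<Longrightarrow> 0 \<le> z s"
  shows "continuous_on A (\<lambda>s. gY P j (z s))"
proof -
  have "1 + delta P j * z s \<noteq> 0" if "s \<in> A" for s using vp[OF assms(1,2)] assms(4)[OF that]
    by (smt (verit) mult_nonneg_nonneg)
  thus ?thesis unfolding gY_def by (intro continuous_intros assms(3)) auto
qed

lemma sing_lemma:
  fixes f :: "real \<Rightarrow> real"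
  assumes b: "0 < \<beta>" and c: "continuous_on {0..<\<beta>} f" and l: "filterlim f at_top (at_left \<beta>)"
  shows "singular f \<beta>" "\<And>s. 0 < s \<Longrightarrow> s < \<beta> \<Longrightarrow> \<not> singular f s"
    "Inf {s. 0 < s \<and> singular f s} = \<beta>"
proof -
  show sb: "singular f \<beta>" unfolding singular_def
  proof
    assume "\<exists>L. (f \<longlongrightarrow> L) (at \<beta>)"
    then obtain L where "(f \<longlongrightarrow> L) (at \<beta>)" by blast
    hence "(f \<longlongrightarrow> L) (at_left \<beta>)" by (rule tendsto_mono[OF at_within_le_at])
    thus False using not_tendsto_and_filterlim_at_infinity[OF trivial_limit_at_left_real _ filterlim_at_top_imp_at_infinity[OF l]]
      by blast
  qed
  show ns: "\<not> singular f s" if "0 < s" "s < \<beta>" for s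
  proof -
    have "s \<in> interior {0..<\<beta>}" using that by simp
    hence "isCont f s" by (rule continuous_on_interior[OF c])
    thus ?thesis unfolding singular_def isCont_def by blast
  qed
  show "Inf {s. 0 < s \<and> singular f s} = \<beta>"
  proof (rule cInf_eq_minimum)
    show "\<beta> \<in> {s. 0 < s \<and> singular f s}" using b sb by simp
  next
    fix x assume "x \<in> {s. 0 < s \<and> singular f s}"
    thus "\<beta> \<le> x" using ns by force
  qed
qed

definition Dn :: "ptm_params \<Rightarrow> nat \<Rightarrow> nat \<Rightarrow> real \<Rightarrow> real" where
  "Dn P n i s = dd P (i+1) (fcas P n (i+1) s) (fYcas P n (i+2) s)"

definition GoodB :: "ptm_params \<Rightarrow> nat \<Rightarrow> nat \<Rightarrow> real \<Rightarrow> bool" where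
  "GoodB P n i \<beta> \<longleftrightarrow> 0 < \<beta> \<and> continuous_on {0..<\<beta>} (fcas P n i) \<and>
     strict_mono_on {0..<\<beta>} (fcas P n i) \<and> fcas P n i 0 = 0 \<and>
     filterlim (fcas P n i) at_top (at_left \<beta>) \<and> Dn P n i \<beta> = 0 \<and>
     (i+1 < n \<longrightarrow> \<beta> < beta P n (i+1)) \<and>
     (\<forall>s. 0 \<le> s \<and> (i+1 < n \<longrightarrow> s < beta P n (i+1)) \<longrightarrow> (0 < Dn P n i s \<longleftrightarrow> s < \<beta>))"

lemma GoodB_beta: "GoodB P n i \<beta> \<Longrightarrow> beta P n i = \<beta>"
  unfolding GoodB_def beta_def using sing_lemma(3) by blast

lemma base_case:
  assumes v: "valid_params P n" and n1: "1 \<le> n"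
  shows "GoodB P n (n-1) (alpha P n)"
proof -
  have nn: "n \<in> {1..n}" using n1 by simp
  note p = vp[OF v nn]
  note a = alpha_char[OF v nn]
  define L where "L = lam P n * Fb P n"
  define G where "G x y = Dg (Sb P n) (Fb P n) (delta P n) (gamma P n) x y" for x y
  have i1: "n - 1 + 1 = n" "n - 1 + 2 = Suc n" "n - 1 < n" using n1 by auto
  have f: "fcas P n (n-1) = (\<lambda>s. L * s / G s 0)"
    by (rule ext, subst fcas_rec[OF i1(3)]) (simp only: i1 L_def G_def dd_Dg fcas_n fYcas_last)
  have D: "Dn P n (n-1) s = dd P n s 0" for s unfolding Dn_def i1 by simp
  have Dp: "0 < G s 0" if "0 \<le> s" "s < alpha P n" for s using a(3)[OF that(1)] that unfolding G_def dd_Dg by simp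
  have Db: "G (alpha P n) 0 = 0" using a(2) unfolding G_def dd_Dg by simp
  have Lp: "L > 0" using p unfolding L_def by simp
  have sm: "strict_mono_on {0..<alpha P n + 1} (\<lambda>s::real. s)" by (auto simp: strict_mono_on_def)
  have mo: "mono_on {0..<alpha P n + 1} (\<lambda>s::real. 0::real)" by (auto simp: mono_on_def)
  have F0: "0 \<le> Fb P n" "0 \<le> gamma P n" "(0::real) = 0" "alpha P n < alpha P n + 1" using p by auto
  note fp' = f_props[of "delta P n" "Fb P n" "gamma P n" L "alpha P n + 1" "\<lambda>s. s" "\<lambda>s. 0" "alpha P n" "Sb P n",
     OF p(1) F0(1,2) Lp continuous_on_id sm F0(3) continuous_on_const mo a(1) F0(4) Dp[unfolded G_def] Db[unfolded G_def], folded G_def]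
  show ?thesis unfolding GoodB_def
  proof (intro conjI)
    show "0 < alpha P n" by (rule a(1))
    show "continuous_on {0..<alpha P n} (fcas P n (n - 1))" unfolding f using fp' p by auto
    show "strict_mono_on {0..<alpha P n} (fcas P n (n - 1))" unfolding f using fp' p by auto
    show "filterlim (fcas P n (n - 1)) at_top (at_left (alpha P n))" unfolding f using fp' p by auto
    show "fcas P n (n - 1) 0 = 0" unfolding f by simp
    show "Dn P n (n - 1) (alpha P n) = 0" unfolding D using a(2) .
    show "n - 1 + 1 < n \<longrightarrow> alpha P n < beta P n (n - 1 + 1)" using i1 by simp
    show "\<forall>s. 0 \<le> s \<and> (n - 1 + 1 < n \<longrightarrow> s < beta P n (n - 1 + 1)) \<longrightarrow>
        (0 < Dn P n (n - 1) s) = (s < alpha P n)" unfolding D using a(3) by blast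
  qed
qed

lemma step_case:
  assumes v: "valid_params P n" and i: "i + 1 < n"
    and G1: "GoodB P n (i+1) (beta P n (i+1))"
    and G2: "i + 2 < n \<Longrightarrow> GoodB P n (i+2) (beta P n (i+2))"
  shows "GoodB P n i (beta P n i)"
proof -
  define b where "b = beta P n (i+1)"
  define x where "x = fcas P n (i+1)"
  define z where "z = fcas P n (i+2)"
  define y where "y = fYcas P n (i+2)"
  have j1: "i+1 \<in> {1..n}" and j2: "i+2 \<in> {1..n}" using i by auto
  note p = vp[OF v j1]
  note a = alpha_char[OF v j1]
  have b0: "0 < b" and xc: "continuous_on {0..<b} x" and xm: "strict_mono_on {0..<b} x"
    and x0: "x 0 = 0" and xl: "filterlim x at_top (at_left b)"
    using G1 unfolding GoodB_def b_def x_def by auto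
  have zprops: "continuous_on {0..<b} z \<and> mono_on {0..<b} z \<and> z 0 = 0"
  proof (cases "i + 2 = n")
    case True
    hence "z = (\<lambda>s. s)" unfolding z_def by auto
    thus ?thesis by (auto simp: mono_on_def intro: continuous_on_id)
  next
    case False
    hence lt: "i + 2 < n" using i by simp
    have bb: "b < beta P n (i+2)" using G1 lt unfolding GoodB_def b_def by (simp add: numeral_2_eq_2)
    have "continuous_on {0..<beta P n (i+2)} z \<and> strict_mono_on {0..<beta P n (i+2)} z \<and> z 0 = 0"
      using G2[OF lt] unfolding GoodB_def z_def by auto
    moreover have sub: "{0..<b} \<subseteq> {0..<beta P n (i+2)}" using bb by auto
    ultimately show ?thesis unfolding mono_on_def strict_mono_on_def
      apply (intro conjI allI impI)
        apply (meson continuous_on_subset)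
       apply (metis less_eq_real_def subsetD order_refl)
      by simp
  qed
  hence zc: "continuous_on {0..<b} z" and zm: "mono_on {0..<b} z" and z0: "z 0 = 0" by auto
  have znn: "0 \<le> z s" if "s \<in> {0..<b}" for s
    using zm that b0 z0 unfolding mono_on_def by (metis atLeastLessThan_iff order_refl)
  have yz: "y = (\<lambda>s. gY P (i+2) (z s))" unfolding y_def z_def using j2 by (auto simp: fYcas_eq)
  have yc: "continuous_on {0..<b} y" unfolding yz by (rule gY_cont[OF v j2 zc znn])
  have ym: "mono_on {0..<b} y" unfolding yz mono_on_def
  proof (intro allI impI)
    fix r s assume "r \<in> {0..<b} \<and> s \<in> {0..<b} \<and> r \<le> s"
    thus "gY P (i+2) (z r) \<le> gY P (i+2) (z s)"
      using gY_mono[OF v j2 znn] zm unfolding mono_on_def by blast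
  qed
  have y0: "y 0 = 0" unfolding yz z0 gY_def by simp
  have ynn: "0 \<le> y s" if "s \<in> {0..<b}" for s unfolding yz using gY_nonneg[OF v j2 znn[OF that]] .
  define G where "G u w = Dg (Sb P (i+1)) (Fb P (i+1)) (delta P (i+1)) (gamma P (i+1)) u w" for u w
  have "\<forall>\<^sub>F s in at_left b. alpha P (i+1) < x s \<and> s \<in> {0<..<b}"
    using xl[unfolded filterlim_at_top_dense] eventually_at_left_real[OF b0]
    by (auto intro: eventually_conj)
  then obtain s1 where s1: "alpha P (i+1) < x s1" "0 < s1" "s1 < b"
    using eventually_happens'[OF trivial_limit_at_left_real] by fastforce
  have xs1: "0 \<le> x s1" using s1 a(1) by simp
  have "G (x s1) (y s1) = dd P (i+1) (x s1) 0 - y s1 * (1 + delta P (i+1) * x s1)"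
    unfolding G_def dd_Dg[symmetric] by (rule dd_y)
  also have "\<dots> \<le> dd P (i+1) (x s1) 0"
    using ynn[of s1] s1 p xs1 by (simp add: mult_nonneg_nonneg)
  also have "\<dots> < 0" using a(4)[OF xs1 s1(1)] .
  finally have Ds1: "G (x s1) (y s1) \<le> 0" by simp
  have F0: "0 \<le> Fb P (i+1)" "0 \<le> gamma P (i+1)" using p by auto
  obtain \<beta> where bp: "0 < \<beta>" "\<beta> \<le> s1" and Db: "G (x \<beta>) (y \<beta>) = 0"
    and char: "\<forall>s. 0 \<le> s \<and> s < b \<longrightarrow> (0 < G (x s) (y s) \<longleftrightarrow> s < \<beta>)"
    using first_zero[OF p(1) F0 p(5) xc xm x0 yc ym y0 s1(2,3) Ds1[unfolded G_def]] unfolding G_def by blast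
  define L where "L = lam P (i+1) * Fb P (i+1)"
  have Lp: "0 < L" using p unfolding L_def by simp
  have f: "fcas P n i = (\<lambda>s. L * x s / G (x s) (y s))"
    by (rule ext, subst fcas_rec) (use i in \<open>simp_all add: L_def G_def x_def y_def dd_Dg\<close>)
  have Dn: "Dn P n i s = G (x s) (y s)" for s unfolding Dn_def G_def x_def y_def dd_Dg ..
  have bb: "\<beta> < b" using bp s1 by simp
  have Dp: "0 < G (x s) (y s)" if "0 \<le> s" "s < \<beta>" for s using char that bb by simp
  note fp = f_props[OF p(1) F0 Lp xc xm x0 yc ym bp(1) bb Dp[unfolded G_def] Db[unfolded G_def], folded G_def, folded f]
  have "GoodB P n i \<beta>" unfolding GoodB_def
  proof (intro conjI)
    show "0 < \<beta>" by (rule bp(1))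
    show "continuous_on {0..<\<beta>} (fcas P n i)" by (rule fp(1))
    show "strict_mono_on {0..<\<beta>} (fcas P n i)" by (rule fp(2))
    show "filterlim (fcas P n i) at_top (at_left \<beta>)" by (rule fp(3))
    show "fcas P n i 0 = 0" unfolding f x0 by simp
    show "Dn P n i \<beta> = 0" unfolding Dn by (rule Db)
    show "i + 1 < n \<longrightarrow> \<beta> < beta P n (i + 1)" using bb unfolding b_def by simp
    show "\<forall>s. 0 \<le> s \<and> (i + 1 < n \<longrightarrow> s < beta P n (i + 1)) \<longrightarrow> (0 < Dn P n i s) = (s < \<beta>)"
      using char i unfolding Dn b_def by blast
  qed
  thus ?thesis using GoodB_beta by metis
qed

lemma main_ind:
  assumes v: "valid_params P n" and n1: "1 \<le> n" and i: "i < n"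
  shows "GoodB P n i (beta P n i)"
proof -
  have "\<forall>j. k \<le> j \<and> j < n \<longrightarrow> GoodB P n j (beta P n j)" if "k \<le> n - 1" for k
    using that
  proof (induction k rule: inc_induct)
    case base
    have "GoodB P n (n-1) (alpha P n)" by (rule base_case[OF v n1])
    hence "GoodB P n (n-1) (beta P n (n-1))" using GoodB_beta by metis
    thus ?case using n1 by (metis le_antisym less_Suc_eq_le Suc_pred' less_le_trans zero_less_one not_le)
  next
    case (step m)
    show ?case
    proof (intro allI impI)
      fix j assume j: "m \<le> j \<and> j < n"
      show "GoodB P n j (beta P n j)"
      proof (cases "j = m")
        case True
        have G1: "GoodB P n (m+1) (beta P n (m+1))" using step.IH step.hyps by simp
        have G2: "GoodB P n (m+2) (beta P n (m+2))" if "m + 2 < n" using step.IH that by simp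
        show ?thesis unfolding True by (rule step_case[OF v _ G1 G2]) (use step.hyps in auto)
      next
        case False
        thus ?thesis using step.IH j by simp
      qed
    qed
  qed
  from this[of i] show ?thesis using i by simp
qed

lemma bmss_facts:
  assumes v: "valid_params P n" and n1: "1 \<le> n" and Eb: "0 < Eb"
    and B: "bmss P n Eb E S0 S1 Fc Y0 Y1"
  defines "S1' \<equiv> (\<lambda>i. if i = 0 then E else S1 i)"
    and "Y0' \<equiv> (\<lambda>i. if i = n + 1 then 0 else Y0 i)"
  shows "\<forall>k\<in>{1..n}. 0 < S1 k \<and> 0 < S1' (k-1) \<and> 0 \<le> Y0' (k+1) \<and>
            0 < dd P k (S1 k) (Y0' (k+1)) \<and>
            dd P k (S1 k) (Y0' (k+1)) * S1' (k-1) = lam P k * Fb P k * S1 k \<and>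
            Y0 k = gY P k (S1 k)"
proof -
  have eq: "\<forall>i\<in>{1..n}.
        Y0 i = gamma P i * Fc i * S1 i \<and>
        Y1 i = delta P i * Fc i * S1 i \<and>
        lam P i * Fc i * S1 i = S0 i * S1' (i - 1) \<and>
        Fb P i = Fc i + Y1 i \<and>
        Sb P i = S0 i + S1 i + Y0 i + Y1 i + Y0' (i + 1)"
    and EbE: "Eb = E + Y0 1" and E0: "0 \<le> E"
    and nn: "\<forall>i\<in>{1..n}. 0 \<le> S0 i \<and> 0 \<le> S1 i \<and> 0 \<le> Fc i \<and> 0 \<le> Y0 i \<and> 0 \<le> Y1 i"
    using B unfolding bmss_def S1'_def Y0'_def Let_def by auto
  have Fcpos: "0 < Fc k" if "k \<in> {1..n}" for k
  proof -
    have "Fb P k = Fc k * (1 + delta P k * S1 k)" using eq that by (simp add: algebra_simps)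
    thus ?thesis using vp[OF v that] nn that by (smt (verit) mult_nonpos_nonneg mult_nonneg_nonneg)
  qed
  have S1'nn: "0 \<le> S1' k" if "k \<le> n" for k using that nn E0 unfolding S1'_def by auto
  have down: "S1' (k-1) = 0" if k: "k \<in> {1..n}" and z: "S1 k = 0" for k
  proof -
    have "lam P k * Fc k * S1 k = S0 k * S1' (k-1)" using eq k by blast
    hence "S0 k * S1' (k-1) = 0" using z by simp
    moreover have "S0 k \<noteq> 0"
    proof
      assume S00: "S0 k = 0"
      have "Sb P k = Y0' (k+1)" using eq k z S00 by simp
      hence Ypos: "0 < Y0' (k+1)" using vp[OF v k] by simp
      hence kn: "k < n" and Y: "Y0 (k+1) > 0" unfolding Y0'_def using k by (auto split: if_splits)
      have k1: "k+1 \<in> {1..n}" using kn by simp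
      have "S1 (k+1) \<noteq> 0" using Y eq k1 by auto
      moreover have "lam P (k+1) * Fc (k+1) * S1 (k+1) = S0 (k+1) * S1' k" using eq k1 by simp
      moreover have "S1' k = 0" using z k unfolding S1'_def by simp
      ultimately show False using vp[OF v k1] Fcpos[OF k1] by simp
    qed
    ultimately show ?thesis by simp
  qed
  have E0': "E \<noteq> 0"
  proof
    assume "E = 0"
    have one: "1 \<in> {1..n}" using n1 by simp
    have "lam P 1 * Fc 1 * S1 1 = 0" using eq one \<open>E = 0\<close> unfolding S1'_def by simp
    hence "S1 1 = 0" using vp[OF v one] Fcpos[OF one] by simp
    hence "Y0 1 = 0" using eq one by simp
    thus False using EbE Eb \<open>E = 0\<close> by simp
  qed
  have allpos: "0 < S1' k" if "k \<le> n" for k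
    using that
  proof (induction k)
    case 0 thus ?case using E0 E0' unfolding S1'_def by simp
  next
    case (Suc k)
    have k: "Suc k \<in> {1..n}" using Suc.prems by simp
    have "S1 (Suc k) \<noteq> 0" using down[OF k] Suc.IH Suc.prems by auto
    thus ?case using nn k unfolding S1'_def by (simp add: less_le)
  qed
  show ?thesis
  proof
    fix k assume k: "k \<in> {1..n}"
    note p = vp[OF v k]
    have S1p: "0 < S1 k" using allpos[of k] k unfolding S1'_def by simp
    have S1m: "0 < S1' (k-1)" using k by (intro allpos) auto
    have Y0n: "0 \<le> Y0' (k+1)" unfolding Y0'_def using nn k by auto
    have FcE: "Fc k * (1 + delta P k * S1 k) = Fb P k" using eq k by (simp add: algebra_simps)
    have dpos: "1 + delta P k * S1 k > 0" using p S1p by (simp add: add_pos_pos)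
    have ddS0: "dd P k (S1 k) (Y0' (k+1)) = S0 k * (1 + delta P k * S1 k)"
    proof -
      have "Sb P k = S0 k + S1 k + (gamma P k + delta P k) * Fc k * S1 k + Y0' (k+1)"
        using eq k by (simp add: algebra_simps)
      thus ?thesis unfolding dd_def using FcE[symmetric] by (simp add: algebra_simps power2_eq_square)
    qed
    have S0p: "0 < S0 k"
    proof -
      have "0 < lam P k * Fc k * S1 k" using p Fcpos[OF k] S1p by simp
      hence "0 < S0 k * S1' (k-1)" using eq k by simp
      thus ?thesis using S1m by (simp add: zero_less_mult_iff)
    qed
    have "dd P k (S1 k) (Y0' (k+1)) * S1' (k-1) = (1 + delta P k * S1 k) * (S0 k * S1' (k-1))"
      unfolding ddS0 by simp
    also have "\<dots> = (1 + delta P k * S1 k) * (lam P k * Fc k * S1 k)" using eq k by simp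
    also have "\<dots> = lam P k * (Fc k * (1 + delta P k * S1 k)) * S1 k" by simp
    also have "\<dots> = lam P k * Fb P k * S1 k" unfolding FcE ..
    finally have rel: "dd P k (S1 k) (Y0' (k+1)) * S1' (k-1) = lam P k * Fb P k * S1 k" .
    have Y0k: "Y0 k = gamma P k * Fc k * S1 k" using eq k by blast
    have "gY P k (S1 k) = gamma P k * (Fc k * (1 + delta P k * S1 k)) * S1 k / (1 + delta P k * S1 k)"
      unfolding gY_def FcE ..
    also have "\<dots> = gamma P k * Fc k * S1 k" using dpos by simp
    finally have gy: "Y0 k = gY P k (S1 k)" using Y0k by simp
    show "0 < S1 k \<and> 0 < S1' (k-1) \<and> 0 \<le> Y0' (k+1) \<and>
            0 < dd P k (S1 k) (Y0' (k+1)) \<and>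
            dd P k (S1 k) (Y0' (k+1)) * S1' (k-1) = lam P k * Fb P k * S1 k \<and>
            Y0 k = gY P k (S1 k)"
      using S1p S1m Y0n rel gy ddS0 S0p dpos by simp
  qed
qed

lemma bmss_main:
  assumes v: "valid_params P n" and n1: "1 \<le> n" and Eb: "0 < Eb"
    and B: "bmss P n Eb E S0 S1 Fc Y0 Y1"
  shows "\<forall>k\<le>n. (if k = 0 then E else S1 k) = fcas P n k (S1 n)"
    "\<forall>k\<in>{1..n}. 0 < dd P k (fcas P n k (S1 n)) (fYcas P n (k+1) (S1 n))"
    "\<forall>k\<in>{1..n}. S1 k < alpha P k"
    "0 < S1 n"
proof -
  define S1' where "S1' = (\<lambda>i. if i = 0 then E else S1 i)"
  define Y0' where "Y0' = (\<lambda>i. if i = n + 1 then 0 else Y0 i)"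
  have F: "\<forall>k\<in>{1..n}. 0 < S1 k \<and> 0 < S1' (k-1) \<and> 0 \<le> Y0' (k+1) \<and>
            0 < dd P k (S1 k) (Y0' (k+1)) \<and>
            dd P k (S1 k) (Y0' (k+1)) * S1' (k-1) = lam P k * Fb P k * S1 k \<and>
            Y0 k = gY P k (S1 k)"
    using bmss_facts[OF v n1 Eb B] unfolding S1'_def Y0'_def .
  have Yeq: "Y0' (k+1) = fYcas P n (k+1) (S1 n)"
    if k: "k \<in> {1..n}" and IH: "S1' (k+1) = fcas P n (k+1) (S1 n)" for k
  proof (cases "k = n")
    case True thus ?thesis unfolding Y0'_def by simp
  next
    case False
    hence k1: "k+1 \<in> {1..n}" using k by simp
    have "Y0 (k+1) = gY P (k+1) (S1 (k+1))" using F k1 by blast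
    thus ?thesis using IH False k1 unfolding Y0'_def S1'_def by (simp add: fYcas_eq)
  qed
  have main: "\<forall>j. m \<le> j \<and> j \<le> n \<longrightarrow> S1' j = fcas P n j (S1 n)" if "m \<le> n" for m
    using that
  proof (induction m rule: inc_induct)
    case base thus ?case using n1 unfolding S1'_def by auto
  next
    case (step m)
    show ?case
    proof (intro allI impI)
      fix j assume j: "m \<le> j \<and> j \<le> n"
      show "S1' j = fcas P n j (S1 n)"
      proof (cases "j = m")
        case False thus ?thesis using step.IH j by simp
      next
        case True
        have k: "m+1 \<in> {1..n}" using step.hyps by simp
        have IH1: "S1' (m+1) = fcas P n (m+1) (S1 n)" using step.IH step.hyps by simp
        have IH2: "S1' (m+1+1) = fcas P n (m+1+1) (S1 n)" if "m + 2 \<le> n"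
          using step.IH that by simp
        have Y: "Y0' (m+1+1) = fYcas P n (m+1+1) (S1 n)"
        proof (cases "m + 1 = n")
          case True thus ?thesis unfolding Y0'_def by simp
        next
          case False thus ?thesis using Yeq[of "m+1"] IH2 k step.hyps by simp
        qed
        have S1k: "S1 (m+1) = fcas P n (m+1) (S1 n)" using IH1 unfolding S1'_def by simp
        have d: "0 < dd P (m+1) (S1 (m+1)) (Y0' (m+1+1))" and
          r: "dd P (m+1) (S1 (m+1)) (Y0' (m+1+1)) * S1' m = lam P (m+1) * Fb P (m+1) * S1 (m+1)"
          using F[rule_format, OF k] by auto
        have "S1' m = lam P (m+1) * Fb P (m+1) * S1 (m+1) / dd P (m+1) (S1 (m+1)) (Y0' (m+1+1))"
          using r d by (simp add: field_simps)
        also have "\<dots> = fcas P n m (S1 n)"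
          using fcas_rec[of m n P "S1 n"] step.hyps S1k Y by (simp add: numeral_2_eq_2)
        finally show ?thesis using True by simp
      qed
    qed
  qed
  have all: "\<forall>k\<le>n. S1' k = fcas P n k (S1 n)" using main[of 0] by simp
  thus "\<forall>k\<le>n. (if k = 0 then E else S1 k) = fcas P n k (S1 n)" unfolding S1'_def .
  have Y: "Y0' (k+1) = fYcas P n (k+1) (S1 n)" if k: "k \<in> {1..n}" for k
  proof (cases "k = n")
    case True thus ?thesis unfolding Y0'_def by simp
  next
    case False thus ?thesis using Yeq[OF k] all k by simp
  qed
  show "\<forall>k\<in>{1..n}. 0 < dd P k (fcas P n k (S1 n)) (fYcas P n (k+1) (S1 n))"
  proof
    fix k assume k: "k \<in> {1..n}"
    have "S1 k = fcas P n k (S1 n)" using all k unfolding S1'_def by (metis atLeastAtMost_iff not_one_le_zero)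
    thus "0 < dd P k (fcas P n k (S1 n)) (fYcas P n (k+1) (S1 n))" using F k Y[OF k] by metis
  qed
  show "\<forall>k\<in>{1..n}. S1 k < alpha P k"
  proof
    fix k assume k: "k \<in> {1..n}"
    have h: "0 < S1 k" "0 \<le> Y0' (k+1)" "0 < dd P k (S1 k) (Y0' (k+1))" using F k by auto
    have "dd P k (S1 k) (Y0' (k+1)) \<le> dd P k (S1 k) 0"
      using dd_y[of P k "S1 k" "Y0' (k+1)"] h vp[OF v k] by (simp add: mult_nonneg_nonneg)
    hence "0 < dd P k (S1 k) 0" using h by simp
    thus "S1 k < alpha P k" using alpha_char(3)[OF v k] h by simp
  qed
  show "0 < S1 n" using F n1 by auto
qed

lemma image_lemma:
  fixes f :: "real \<Rightarrow> real"
  assumes b: "0 < \<beta>" and c: "continuous_on {0..<\<beta>} f" and m: "strict_mono_on {0..<\<beta>} f"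
    and f0: "f 0 = 0" and l: "filterlim f at_top (at_left \<beta>)"
  shows "f ` {0..<\<beta>} = {0..}"
proof
  show "f ` {0..<\<beta>} \<subseteq> {0..}"
  proof
    fix w assume "w \<in> f ` {0..<\<beta>}"
    then obtain s where s: "s \<in> {0..<\<beta>}" "w = f s" by blast
    show "w \<in> {0..}"
    proof (cases "s = 0")
      case True thus ?thesis using s f0 by simp
    next
      case False
      hence "f 0 < f s" using m s b unfolding strict_mono_on_def by auto
      thus ?thesis using s f0 by simp
    qed
  qed
  show "{0..} \<subseteq> f ` {0..<\<beta>}"
  proof
    fix w :: real assume w: "w \<in> {0..}"
    have "\<forall>\<^sub>F s in at_left \<beta>. w < f s \<and> s \<in> {0<..<\<beta>}"
      using l[unfolded filterlim_at_top_dense] eventually_at_left_real[OF b]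
      by (auto intro: eventually_conj)
    then obtain s where s: "w < f s" "0 < s" "s < \<beta>"
      using eventually_happens'[OF trivial_limit_at_left_real] by fastforce
    have "continuous_on {0..s} f" by (rule continuous_on_subset[OF c]) (use s in auto)
    then obtain u where u: "0 \<le> u" "u \<le> s" "f u = w"
      using IVT'[of f 0 w s] w f0 s by auto
    thus "w \<in> f ` {0..<\<beta>}" using s by force
  qed
qed

lemma cas_indep:
  assumes r: "\<forall>j. a0 Q j = a0 P j \<and> b0 Q j = b0 P j \<and> c0 Q j = c0 P j \<and>
                a1 Q j = a1 P j \<and> b1 Q j = b1 P j \<and> c1 Q j = c1 P j"
    and f: "\<forall>j\<in>{i + 1..n}. Fb Q j = Fb P j \<and> Sb Q j = Sb P j"
  shows "k \<le> n - i \<Longrightarrow> cas Q n k s = cas P n k s"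
proof (induction k)
  case 0 thus ?case by simp
next
  case (Suc k)
  have m: "n - k \<in> {i+1..n}" using Suc.prems by auto
  have e: "lam Q (n-k) = lam P (n-k)" "delta Q (n-k) = delta P (n-k)" "gamma Q (n-k) = gamma P (n-k)"
    "Fb Q (n-k) = Fb P (n-k)" "Sb Q (n-k) = Sb P (n-k)"
    using r f m unfolding lam_def gamma_def delta_def by auto
  have dd: "dd Q (n-k) = dd P (n-k)" unfolding dd_def[abs_def] e ..
  have gy: "gY Q (n-k) = gY P (n-k)" unfolding gY_def[abs_def] e ..
  show ?case using Suc by (simp add: Let_def e dd gy)
qed

lemma fcas_indep:
  assumes r: "\<forall>j. a0 Q j = a0 P j \<and> b0 Q j = b0 P j \<and> c0 Q j = c0 P j \<and>
                a1 Q j = a1 P j \<and> b1 Q j = b1 P j \<and> c1 Q j = c1 P j"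
    and f: "\<forall>j\<in>{i + 1..n}. Fb Q j = Fb P j \<and> Sb Q j = Sb P j"
  shows "fcas Q n i = fcas P n i"
  unfolding fcas_def[abs_def] using cas_indep[OF r f] by simp

lemma fcas_prod:
  assumes "i \<le> n"
  shows "fcas P n i s = (\<Prod>j\<in>{i + 1..n}. lam P j * Fb P j) * s /
           (\<Prod>j\<in>{i + 1..n}. dd P j (fcas P n j s) (fYcas P n (j + 1) s))"
  using assms
proof (induction i rule: inc_induct)
  case base thus ?case by simp
next
  case (step m)
  have e1: "{m+1..n} = insert (m+1) {m+2..n}" "m+1 \<notin> {m+2..n}" using step.hyps by auto
  have alg: "L*(C*x/D)/d = (L*C)*x/(d*D)" for L C x D d :: real
    by (simp add: divide_divide_eq_left mult.commute mult.left_commute)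
  have r: "fcas P n m s = lam P (m+1) * Fb P (m+1) * fcas P n (m+1) s /
           dd P (m+1) (fcas P n (m+1) s) (fYcas P n (m+2) s)" by (rule fcas_rec) (use step.hyps in simp)
  have X: "fcas P n (m+1) s = (\<Prod>j\<in>{m + 2..n}. lam P j * Fb P j) * s /
           (\<Prod>j\<in>{m + 2..n}. dd P j (fcas P n j s) (fYcas P n (j + 1) s))"
    using step.IH by (simp add: numeral_2_eq_2)
  have "fcas P n m s = (lam P (m+1) * Fb P (m+1) * (\<Prod>j\<in>{m + 2..n}. lam P j * Fb P j)) * s /
     (dd P (m+1) (fcas P n (m+1) s) (fYcas P n (m+2) s) * (\<Prod>j\<in>{m + 2..n}. dd P j (fcas P n j s) (fYcas P n (j + 1) s)))"
    unfolding r by (subst (1) X) (rule alg)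
  thus ?case unfolding e1 by (simp add: e1 numeral_2_eq_2 mult.assoc)
qed

lemma Dg_large:
  fixes t F d g X Y :: real
  assumes "0 \<le> X" "d > 0" "F \<ge> 0" "g \<ge> 0" "t > Y + X + F*(d+g)*X + d*X^2"
  shows "0 < Dg t F d g X Y"
proof -
  have "0 \<le> X + F*(d+g)*X + d*X^2" using assms by (simp add: add_nonneg_nonneg mult_nonneg_nonneg)
  hence tY: "0 \<le> t - Y" using assms(5) by linarith
  have "(t - Y) * (1 + d*X) \<ge> (t - Y) * 1"
    using assms tY by (intro mult_left_mono) (auto simp: add_nonneg_nonneg)
  hence "(t - Y) * (1 + d*X) \<ge> t - Y" by simp
  moreover have "Dg t F d g X Y = (t - Y) * (1 + d*X) - X - F*(d+g)*X - d*X^2"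
    unfolding Dg_def by (simp add: algebra_simps)
  ultimately show ?thesis using assms by linarith
qed

lemma valid_upd:
  assumes "valid_params P n" "0 < t"
  shows "valid_params (P\<lparr>Sb := (Sb P)(k := t)\<rparr>) n"
  using assms unfolding valid_params_def by auto

lemma lim_d1:
  assumes v: "valid_params P n" and n1: "1 \<le> n" and i: "i + 1 < n"
  shows "((\<lambda>t. beta (P\<lparr>Sb := (Sb P)(i + 1 := t)\<rparr>) n i) \<longlongrightarrow> beta P n (i + 1)) at_top"
proof -
  define Q where "Q t = P\<lparr>Sb := (Sb P)(i + 1 := t)\<rparr>" for t
  define b where "b = beta P n (i+1)"
  define x where "x = fcas P n (i+1)"
  define y where "y = fYcas P n (i+2)"
  have j1: "i+1 \<in> {1..n}" using i by simp
  note p = vp[OF v j1]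
  have rates: "\<forall>j. a0 (Q t) j = a0 P j \<and> b0 (Q t) j = b0 P j \<and> c0 (Q t) j = c0 P j \<and>
                a1 (Q t) j = a1 P j \<and> b1 (Q t) j = b1 P j \<and> c1 (Q t) j = c1 P j" for t
    unfolding Q_def by simp
  have fx: "fcas (Q t) n (i+1) = x" for t unfolding x_def
    by (rule fcas_indep[OF rates]) (auto simp: Q_def)
  have fz: "fcas (Q t) n (i+2) = fcas P n (i+2)" for t
    by (rule fcas_indep[OF rates]) (auto simp: Q_def)
  have gy: "gY (Q t) (i+2) = gY P (i+2)" for t
    unfolding gY_def[abs_def] gamma_def delta_def Q_def by simp
  have fy: "fYcas (Q t) n (i+2) = y" for t unfolding y_def fYcas_def[abs_def] fz gy ..
  have bQ: "beta (Q t) n (i+1) = b" for t unfolding b_def beta_def fx x_def ..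
  have same: "delta (Q t) (i+1) = delta P (i+1)" "gamma (Q t) (i+1) = gamma P (i+1)" "Fb (Q t) (i+1) = Fb P (i+1)"
    "Sb (Q t) (i+1) = t" for t
    unfolding Q_def delta_def gamma_def by auto
  have DnQ: "Dn (Q t) n i s = Dg t (Fb P (i+1)) (delta P (i+1)) (gamma P (i+1)) (x s) (y s)" for t s
    unfolding Dn_def dd_Dg fx fy same ..
  have GQ: "GoodB (Q t) n i (beta (Q t) n i)" if "t > 0" for t
    using main_ind[OF valid_upd[OF v that] n1, of i] i unfolding Q_def by simp
  have up: "beta (Q t) n i < b" if "t > 0" for t using GQ[OF that] i unfolding GoodB_def bQ by simp
  have bpos: "0 < beta (Q t) n i" if "t > 0" for t using GQ[OF that] unfolding GoodB_def by simp
  have Gb: "GoodB P n (i+1) b" using main_ind[OF v n1, of "i+1"] i unfolding b_def by simp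
  have xnn: "0 \<le> x s" if "0 \<le> s" "s < b" for s
  proof (cases "s = 0")
    case True thus ?thesis using Gb unfolding GoodB_def x_def by simp
  next
    case False
    have sm: "strict_mono_on {0..<b} x" using Gb unfolding GoodB_def x_def by simp
    have "x 0 < x s" using sm that False unfolding strict_mono_on_def by auto
    thus ?thesis using Gb unfolding GoodB_def x_def by simp
  qed
  show ?thesis unfolding Q_def[symmetric] b_def[symmetric]
  proof (rule order_tendstoI)
    fix a assume a: "a > b"
    show "\<forall>\<^sub>F t in at_top. beta (Q t) n i < a"
      using eventually_gt_at_top[of "0::real"] by eventually_elim (use up a in force)
  next
    fix a assume a: "a < b"
    show "\<forall>\<^sub>F t in at_top. a < beta (Q t) n i"
    proof (cases "a < 0")
      case True
      show ?thesis using eventually_gt_at_top[of "0::real"] by eventually_elim (use bpos True in force)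
    next
      case False
      hence a0: "0 \<le> a" by simp
      define X where "X = x a"
      define Y where "Y = y a"
      have X0: "0 \<le> X" unfolding X_def using xnn a0 a by simp
      define c where "c = max 0 (Y + X + Fb P (i+1)*(delta P (i+1)+gamma P (i+1))*X + delta P (i+1)*X^2)"
      show ?thesis using eventually_gt_at_top[of c]
      proof eventually_elim
        case (elim t)
        hence t0: "t > 0" unfolding c_def by simp
        have "0 < Dn (Q t) n i a" unfolding DnQ
          using Dg_large[OF X0 p(1), where F="Fb P (i+1)" and g="gamma P (i+1)" and t=t and Y=Y] p elim unfolding c_def X_def Y_def
          by simp
        thus ?case using GQ[OF t0] a0 a i unfolding GoodB_def bQ by blast
      qed
    qed
  qed
qed

lemma lim_d2:
  assumes v: "valid_params P n" and n1: "1 \<le> n" and i: "i = n - 1"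
  shows "filterlim (\<lambda>t. beta (P\<lparr>Sb := (Sb P)(i + 1 := t)\<rparr>) n i) at_top at_top"
proof -
  define Q where "Q t = P\<lparr>Sb := (Sb P)(i + 1 := t)\<rparr>" for t
  have i1: "i + 1 = n" using i n1 by simp
  have nn: "n \<in> {1..n}" using n1 by simp
  note p = vp[OF v nn]
  have bQ: "beta (Q t) n i = alpha (Q t) n" if "t > 0" for t
    using GoodB_beta[OF base_case[OF valid_upd[OF v that] n1]] i unfolding Q_def by simp
  have same: "delta (Q t) n = delta P n" "gamma (Q t) n = gamma P n" "Fb (Q t) n = Fb P n"
    "Sb (Q t) n = t" for t
    unfolding Q_def delta_def gamma_def using i1 by auto
  show ?thesis unfolding Q_def[symmetric] filterlim_at_top_dense
  proof
    fix Z :: real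
    define c where "c = max 0 (Z + Fb P n*(delta P n+gamma P n)*Z + delta P n*Z^2)"
    show "\<forall>\<^sub>F t in at_top. Z < beta (Q t) n i" using eventually_gt_at_top[of c]
    proof eventually_elim
      case (elim t)
      hence t0: "t > 0" unfolding c_def by simp
      note a = alpha_char[OF valid_upd[OF v t0, where k="i+1"] nn, folded Q_def]
      show ?case
      proof (cases "Z < 0")
        case True thus ?thesis using a(1) bQ[OF t0] by simp
      next
        case False
        hence Z0: "0 \<le> Z" by simp
        have "0 < dd (Q t) n Z 0" unfolding dd_Dg same
          using Dg_large[OF Z0 p(1), where F="Fb P n" and g="gamma P n" and t=t and Y=0] p elim unfolding c_def by simp
        thus ?thesis using a(3)[OF Z0] bQ[OF t0] by simp
      qed
    qed
  qed
qed

lemma bmss_beta: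
  assumes v: "valid_params P n" and n1: "1 \<le> n" and Eb: "0 < Eb"
    and B: "bmss P n Eb E S0 S1 Fc Y0 Y1" and i: "i < n"
  shows "S1 n < beta P n i"
proof -
  note bm = bmss_main[OF v n1 Eb B]
  have "S1 n < beta P n k" if "k \<le> n - 1" for k
    using that
  proof (induction k rule: inc_induct)
    case base
    have G: "GoodB P n (n-1) (beta P n (n-1))" using main_ind[OF v n1, of "n-1"] n1 by simp
    have k: "n \<in> {1..n}" using n1 by simp
    have "0 < Dn P n (n-1) (S1 n)" using bm(2)[rule_format, OF k] n1 unfolding Dn_def by (simp add: numeral_2_eq_2)
    thus ?case using G bm(4) n1 unfolding GoodB_def by simp
  next
    case (step m)
    have G: "GoodB P n m (beta P n m)" using main_ind[OF v n1, of m] step.hyps by simp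
    have k: "m+1 \<in> {1..n}" using step.hyps by simp
    have "0 < Dn P n m (S1 n)" using bm(2)[rule_format, OF k] unfolding Dn_def by (simp add: numeral_2_eq_2)
    thus ?case using G bm(4) step.IH step.hyps unfolding GoodB_def by simp
  qed
  thus ?thesis using i by simp
qed

theorem mainTheorem6:
  fixes P :: ptm_params and n :: nat and Eb :: real
  assumes n1: "1 \<le> n"
    and pos: "valid_params P n"
    and Ebpos: "0 < Eb"
  shows
   "(\<forall>i<n.
      \<comment> \<open>(a)\<close>
      0 < beta P n i \<and>
      continuous_on {0..<beta P n i} (fcas P n i) \<and>
      strict_mono_on {0..<beta P n i} (fcas P n i) \<and>
      fcas P n i 0 = 0 \<and>
      fcas P n i ` {0..<beta P n i} = {0..} \<and>
      singular (fcas P n i) (beta P n i) \<and>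
      (\<forall>s. 0 < s \<and> s < beta P n i \<longrightarrow> \<not> singular (fcas P n i) s) \<and>
      dd P (i + 1) (fcas P n (i + 1) (beta P n i)) (fYcas P n (i + 2) (beta P n i)) = 0 \<and>
      \<comment> \<open>(b)\<close>
      (\<forall>E S0 S1 Fc Y0 Y1. bmss P n Eb E S0 S1 Fc Y0 Y1 \<longrightarrow>
          0 \<le> S1 n \<and> S1 n < beta P n i \<and>
          (if i = 0 then E else S1 i) = fcas P n i (S1 n)) \<and>
      (\<forall>Q. (\<forall>j. a0 Q j = a0 P j \<and> b0 Q j = b0 P j \<and> c0 Q j = c0 P j \<and>
                a1 Q j = a1 P j \<and> b1 Q j = b1 P j \<and> c1 Q j = c1 P j) \<and>
           (\<forall>j\<in>{i + 1..n}. Fb Q j = Fb P j \<and> Sb Q j = Sb P j) \<longrightarrow>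
           fcas Q n i = fcas P n i) \<and>
      (\<forall>s. fcas P n i s =
           (\<Prod>j\<in>{i + 1..n}. lam P j * Fb P j) * s /
           (\<Prod>j\<in>{i + 1..n}. dd P j (fcas P n j s) (fYcas P n (j + 1) s))) \<and>
      \<comment> \<open>(c)\<close>
      (i = n - 1 \<longrightarrow> beta P n i = alpha P n) \<and>
      (i < n - 1 \<longrightarrow> beta P n i < beta P n (i + 1)) \<and>
      \<comment> \<open>(d)\<close>
      (i < n - 1 \<longrightarrow>
         ((\<lambda>t. beta (P\<lparr>Sb := (Sb P)(i + 1 := t)\<rparr>) n i) \<longlongrightarrow> beta P n (i + 1)) at_top) \<and>
      (i = n - 1 \<longrightarrow>
         filterlim (\<lambda>t. beta (P\<lparr>Sb := (Sb P)(i + 1 := t)\<rparr>) n i) at_top at_top))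
    \<and>
    \<comment> \<open>(e)\<close>
    (\<forall>E S0 S1 Fc Y0 Y1. bmss P n Eb E S0 S1 Fc Y0 Y1 \<longrightarrow>
        (\<forall>j\<in>{1..n}. S1 j < alpha P j))"
proof -
  have part: "      \<comment> \<open>(a)\<close>
      0 < beta P n i \<and>
      continuous_on {0..<beta P n i} (fcas P n i) \<and>
      strict_mono_on {0..<beta P n i} (fcas P n i) \<and>
      fcas P n i 0 = 0 \<and>
      fcas P n i ` {0..<beta P n i} = {0..} \<and>
      singular (fcas P n i) (beta P n i) \<and>
      (\<forall>s. 0 < s \<and> s < beta P n i \<longrightarrow> \<not> singular (fcas P n i) s) \<and>
      dd P (i + 1) (fcas P n (i + 1) (beta P n i)) (fYcas P n (i + 2) (beta P n i)) = 0 \<and>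
      \<comment> \<open>(b)\<close>
      (\<forall>E S0 S1 Fc Y0 Y1. bmss P n Eb E S0 S1 Fc Y0 Y1 \<longrightarrow>
          0 \<le> S1 n \<and> S1 n < beta P n i \<and>
          (if i = 0 then E else S1 i) = fcas P n i (S1 n)) \<and>
      (\<forall>Q. (\<forall>j. a0 Q j = a0 P j \<and> b0 Q j = b0 P j \<and> c0 Q j = c0 P j \<and>
                a1 Q j = a1 P j \<and> b1 Q j = b1 P j \<and> c1 Q j = c1 P j) \<and>
           (\<forall>j\<in>{i + 1..n}. Fb Q j = Fb P j \<and> Sb Q j = Sb P j) \<longrightarrow>
           fcas Q n i = fcas P n i) \<and>
      (\<forall>s. fcas P n i s =
           (\<Prod>j\<in>{i + 1..n}. lam P j * Fb P j) * s /
           (\<Prod>j\<in>{i + 1..n}. dd P j (fcas P n j s) (fYcas P n (j + 1) s))) \<and>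
      \<comment> \<open>(c)\<close>
      (i = n - 1 \<longrightarrow> beta P n i = alpha P n) \<and>
      (i < n - 1 \<longrightarrow> beta P n i < beta P n (i + 1)) \<and>
      \<comment> \<open>(d)\<close>
      (i < n - 1 \<longrightarrow>
         ((\<lambda>t. beta (P\<lparr>Sb := (Sb P)(i + 1 := t)\<rparr>) n i) \<longlongrightarrow> beta P n (i + 1)) at_top) \<and>
      (i = n - 1 \<longrightarrow>
         filterlim (\<lambda>t. beta (P\<lparr>Sb := (Sb P)(i + 1 := t)\<rparr>) n i) at_top at_top)" if i: "i < n" for i
  proof -
    have G: "GoodB P n i (beta P n i)" by (rule main_ind[OF pos n1 i])
    have b0: "0 < beta P n i" and c: "continuous_on {0..<beta P n i} (fcas P n i)"
      and m: "strict_mono_on {0..<beta P n i} (fcas P n i)" and f0: "fcas P n i 0 = 0"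
      and l: "filterlim (fcas P n i) at_top (at_left (beta P n i))" and D: "Dn P n i (beta P n i) = 0"
      and lt: "i+1 < n \<longrightarrow> beta P n i < beta P n (i+1)"
      using G unfolding GoodB_def by auto
    note sg = sing_lemma[OF b0 c l]
    show ?thesis
    proof (intro conjI)
      show "0 < beta P n i" by (rule b0)
      show "continuous_on {0..<beta P n i} (fcas P n i)" by (rule c)
      show "strict_mono_on {0..<beta P n i} (fcas P n i)" by (rule m)
      show "fcas P n i 0 = 0" by (rule f0)
      show "fcas P n i ` {0..<beta P n i} = {0..}" by (rule image_lemma[OF b0 c m f0 l])
      show "singular (fcas P n i) (beta P n i)" by (rule sg(1))
      show "\<forall>s. 0 < s \<and> s < beta P n i \<longrightarrow> \<not> singular (fcas P n i) s" using sg(2) by blast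
      show "dd P (i + 1) (fcas P n (i + 1) (beta P n i)) (fYcas P n (i + 2) (beta P n i)) = 0"
        using D unfolding Dn_def .
      show "\<forall>E S0 S1 Fc Y0 Y1. bmss P n Eb E S0 S1 Fc Y0 Y1 \<longrightarrow>
          0 \<le> S1 n \<and> S1 n < beta P n i \<and>
          (if i = 0 then E else S1 i) = fcas P n i (S1 n)"
      proof (intro allI impI conjI)
        fix E S0 S1 Fc Y0 Y1 assume B: "bmss P n Eb E S0 S1 Fc Y0 Y1"
        note bm = bmss_main[OF pos n1 Ebpos B]
        show "0 \<le> S1 n" using bm(4) by simp
        show "S1 n < beta P n i" by (rule bmss_beta[OF pos n1 Ebpos B i])
        show "(if i = 0 then E else S1 i) = fcas P n i (S1 n)" using bm(1) i by simp
      qed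
      show "\<forall>Q. (\<forall>j. a0 Q j = a0 P j \<and> b0 Q j = b0 P j \<and> c0 Q j = c0 P j \<and>
                a1 Q j = a1 P j \<and> b1 Q j = b1 P j \<and> c1 Q j = c1 P j) \<and>
           (\<forall>j\<in>{i + 1..n}. Fb Q j = Fb P j \<and> Sb Q j = Sb P j) \<longrightarrow>
           fcas Q n i = fcas P n i"
        using fcas_indep by blast
      show "\<forall>s. fcas P n i s =
           (\<Prod>j\<in>{i + 1..n}. lam P j * Fb P j) * s /
           (\<Prod>j\<in>{i + 1..n}. dd P j (fcas P n j s) (fYcas P n (j + 1) s))"
        using fcas_prod i by simp
      show "i = n - 1 \<longrightarrow> beta P n i = alpha P n"
        using GoodB_beta[OF base_case[OF pos n1]] by simp
      show "i < n - 1 \<longrightarrow> beta P n i < beta P n (i + 1)" using lt by simp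
      show "i < n - 1 \<longrightarrow>
         ((\<lambda>t. beta (P\<lparr>Sb := (Sb P)(i + 1 := t)\<rparr>) n i) \<longlongrightarrow> beta P n (i + 1)) at_top"
        using lim_d1[OF pos n1] by simp
      show "i = n - 1 \<longrightarrow>
         filterlim (\<lambda>t. beta (P\<lparr>Sb := (Sb P)(i + 1 := t)\<rparr>) n i) at_top at_top"
        using lim_d2[OF pos n1] by simp
    qed
  qed
  have epart: "    (\<forall>E S0 S1 Fc Y0 Y1. bmss P n Eb E S0 S1 Fc Y0 Y1 \<longrightarrow>
        (\<forall>j\<in>{1..n}. S1 j < alpha P j))"
    using bmss_main(3)[OF pos n1 Ebpos] by blast
  show ?thesis using part epart by blast
qed

end
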